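(* Let $\mathbf X=(X_1,\dots,X_n)$ be a random vector whose components are mutually independent, each $X_i$ taking values in a finite set $V_i\subset\mathbb{R}$, and let $f:\mathbb{R}^n\to\mathbb{R}$ be arbitrary. Then for all $T\subset T'\subset[n]$ and every $j\in[n]\setminus T'$, $$\mathrm{EVar}(T\cup\{j\})-\mathrm{EVar}(T)\ \ge\ \mathrm{EVar}(T'\cup\{j\})-\mathrm{EVar}(T').$$
   Context: For $T=\{i_1<\dots<i_k\}\subseteq[n]$ write $\mathbf X_T=(X_{i_1},\dots,X_{i_k})$ and $\mathbf V_T=V_{i_1}\times\dots\times V_{i_k}$. Define $$\mathrm{EVar}(T)=\sum_{\mathbf v\in\mathbf V_T,\ \Pr[\mathbf X_T=\mathbf v]>0}\Pr[\mathbf X_T=\mathbf v]\cdot \mathrm{Var}\big(f(\mathbf X)\mid \mathbf X_T=\mathbf v\big),$$ with $\mathrm{EVar}(\emptyset)=\mathrm{Var}(f(\mathbf X))$. *)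

theory Defs
  imports "HOL-Probability.Probability"
begin

text \<open>The random vector X = (X_0, ..., X_{n-1}) is given by the family X of real random
variables on the probability space M; f(X) is f applied to the list of its components.\<close>

definition fX :: "nat \<Rightarrow> (real list \<Rightarrow> real) \<Rightarrow> (nat \<Rightarrow> 'a \<Rightarrow> real) \<Rightarrow> 'a \<Rightarrow> real" where
  "fX n f X = (\<lambda>\<omega>. f (map (\<lambda>i. X i \<omega>) [0..<n]))"

definition cond_event :: "'a measure \<Rightarrow> (nat \<Rightarrow> 'a \<Rightarrow> real) \<Rightarrow> nat set \<Rightarrow> (nat \<Rightarrow> real) \<Rightarrow> 'a set" where
  "cond_event M X T v = {\<omega> \<in> space M. \<forall>i\<in>T. X i \<omega> = v i}"

definition cond_exp_ev :: "'a measure \<Rightarrow> 'a set \<Rightarrow> ('a \<Rightarrow> real) \<Rightarrow> real" where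
  "cond_exp_ev M A g = (\<integral>\<omega>. indicator A \<omega> * g \<omega> \<partial>M) / measure M A"

definition cond_var_ev :: "'a measure \<Rightarrow> 'a set \<Rightarrow> ('a \<Rightarrow> real) \<Rightarrow> real" where
  "cond_var_ev M A g = cond_exp_ev M A (\<lambda>\<omega>. (g \<omega> - cond_exp_ev M A g)\<^sup>2)"

definition EVar :: "'a measure \<Rightarrow> (nat \<Rightarrow> 'a \<Rightarrow> real) \<Rightarrow> (nat \<Rightarrow> real set) \<Rightarrow> nat
    \<Rightarrow> (real list \<Rightarrow> real) \<Rightarrow> nat set \<Rightarrow> real" where
  "EVar M X V n f T =
     (\<Sum>v\<in>{v \<in> PiE T V. measure M (cond_event M X T v) > 0}.
        measure M (cond_event M X T v) * cond_var_ev M (cond_event M X T v) (fX n f X))"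

end

theory Submission
  imports Defs
begin


lemma restr_eq: assumes "v \<in> extensional S" shows "restrict w S = v \<longleftrightarrow> (\<forall>i\<in>S. w i = v i)"
proof
  assume "restrict w S = v"
  then show "\<forall>i\<in>S. w i = v i" by (metis restrict_apply')
next
  assume a: "\<forall>i\<in>S. w i = v i"
  show "restrict w S = v"
    by (rule extensionalityI[OF restrict_extensional assms]) (simp add: a)
qed

locale finw =
  fixes I :: "nat set" and V :: "nat \<Rightarrow> real set" and p :: "(nat \<Rightarrow> real) \<Rightarrow> real"
    and F :: "(nat \<Rightarrow> real) \<Rightarrow> real"
  assumes finI: "finite I" and finV: "\<forall>i\<in>I. finite (V i)" and pnn: "\<And>w. p w \<ge> 0"
begin

abbreviation W where "W \<equiv> PiE I V"

lemma finW: "finite W" using finI finV by (simp add: finite_PiE)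

definition cell :: "nat set \<Rightarrow> (nat\<Rightarrow>real) \<Rightarrow> (nat\<Rightarrow>real) set" where
  "cell S v = {w\<in>W. \<forall>i\<in>S. w i = v i}"
definition "m S v = (\<Sum>w\<in>cell S v. p w)"
definition "s S v = (\<Sum>w\<in>cell S v. p w * F w)"
definition "h S w = s S w / m S w"
definition "E g = (\<Sum>w\<in>W. p w * g w)"
definition "G S = (\<Sum>v\<in>PiE S V. (s S v)^2 / m S v)"
definition "cst S k \<longleftrightarrow> (\<forall>w\<in>W. \<forall>w'\<in>W. (\<forall>i\<in>S. w i = w' i) \<longrightarrow> k w = k w')"
definition "mj j x = (\<Sum>w\<in>{w\<in>W. w j = x}. p w)"
definition "indepS j S \<longleftrightarrow> (\<forall>v\<in>PiE S V. \<forall>x. (\<Sum>w\<in>{w\<in>cell S v. w j = x}. p w) = m S v * mj j x)"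
definition "Ev S = (\<Sum>v\<in>{v\<in>PiE S V. m S v > 0}.
      m S v * ((\<Sum>w\<in>cell S v. p w * (F w - s S v / m S v)^2) / m S v))"

lemma fin_cell[simp]: "finite (cell S v)"
  using finW unfolding cell_def by auto

lemma m_nn: "m S v \<ge> 0" unfolding m_def by (simp add: sum_nonneg pnn)

lemma m0: "m S v = 0 \<Longrightarrow> w \<in> cell S v \<Longrightarrow> p w = 0"
  unfolding m_def using sum_nonneg_eq_0_iff[of "cell S v" p] pnn by auto

lemma pc: "(\<Sum>w\<in>cell S v. p w * c) = m S v * c"
  unfolding m_def by (simp add: sum_distrib_right)

lemma s0: "m S v = 0 \<Longrightarrow> s S v = 0"
  unfolding s_def using m0 by (auto intro!: sum.neutral)

lemma finPi: assumes "S \<subseteq> I" shows "finite (PiE S V)"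
  using finite_subset[OF assms finI] finV assms by (intro finite_PiE) auto

lemma GL: assumes "S \<subseteq> I" shows "(\<Sum>w\<in>W. g w) = (\<Sum>v\<in>PiE S V. \<Sum>w\<in>cell S v. g w)"
proof -
  have fS: "finite (PiE S V)" using finPi[OF assms] .
  have img: "(\<lambda>w. restrict w S) ` W \<subseteq> PiE S V"
  proof (rule image_subsetI)
    fix w assume "w \<in> W"
    then show "restrict w S \<in> PiE S V" unfolding restrict_PiE_iff using assms by (metis PiE_mem subsetD)
  qed
  have "(\<Sum>w\<in>W. g w) = (\<Sum>v\<in>PiE S V. sum g {w. w \<in> W \<and> restrict w S = v})"
    by (rule sum.group[OF finW fS img, symmetric])
  also have "\<dots> = (\<Sum>v\<in>PiE S V. \<Sum>w\<in>cell S v. g w)"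
  proof (rule sum.cong[OF refl])
    fix v assume v: "v \<in> PiE S V"
    have ve: "v \<in> extensional S" using v by (simp add: PiE_def)
    have "{w. w \<in> W \<and> restrict w S = v} = cell S v"
      unfolding cell_def using restr_eq[OF ve] by blast
    then show "sum g {w. w \<in> W \<and> restrict w S = v} = (\<Sum>w\<in>cell S v. g w)" by simp
  qed
  finally show ?thesis .
qed

lemma cell_eq: "w \<in> cell S v \<Longrightarrow> cell S w = cell S v"
  unfolding cell_def by auto

lemma h_cell: "w \<in> cell S v \<Longrightarrow> h S w = s S v / m S v"
proof -
  assume "w \<in> cell S v"
  then have "cell S w = cell S v" by (rule cell_eq)
  then show ?thesis unfolding h_def m_def s_def by simp
qed

lemma cst_h: "cst S (h S)"
  unfolding cst_def
proof (intro ballI impI)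
  fix w w' assume "w \<in> W" "w' \<in> W" "\<forall>i\<in>S. w i = w' i"
  then have "cell S w = cell S w'" unfolding cell_def by auto
  then show "h S w = h S w'" unfolding h_def m_def s_def by simp
qed

lemma cst_mono: "S \<subseteq> S' \<Longrightarrow> cst S k \<Longrightarrow> cst S' k"
  unfolding cst_def by blast

lemma cst_diff: assumes a: "cst S k" and b: "cst S k'" shows "cst S (\<lambda>w. k w - k' w)"
  unfolding cst_def
proof (intro ballI impI)
  fix w w' assume "w \<in> W" "w' \<in> W" "\<forall>i\<in>S. w i = w' i"
  moreover have "k w = k w'" using a calculation unfolding cst_def by blast
  moreover have "k' w = k' w'" using b calculation unfolding cst_def by blast
  ultimately show "k w - k' w = k w' - k' w'" by simp
qed

lemma cell_const:
  fixes k g :: "(nat \<Rightarrow> real) \<Rightarrow> real"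
  assumes "w0 \<in> cell S v" "cst S k"
  shows "(\<Sum>w\<in>cell S v. g w * k w) = (\<Sum>w\<in>cell S v. g w) * k w0"
proof -
  have "(\<Sum>w\<in>cell S v. g w * k w) = (\<Sum>w\<in>cell S v. g w * k w0)"
  proof (rule sum.cong[OF refl])
    fix w assume "w \<in> cell S v"
    then have "w \<in> W" "w0 \<in> W" "\<forall>i\<in>S. w i = w0 i" using assms(1) unfolding cell_def by auto
    then have "k w = k w0" using assms(2) unfolding cst_def by blast
    then show "g w * k w = g w * k w0" by simp
  qed
  also have "\<dots> = (\<Sum>w\<in>cell S v. g w) * k w0" by (rule sum_distrib_right[symmetric])
  finally show ?thesis .
qed

lemma lemma_a:
  assumes S: "S \<subseteq> I" and k: "cst S k"
  shows "E (\<lambda>w. h S w * k w) = E (\<lambda>w. F w * k w)"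
proof -
  have "E (\<lambda>w. h S w * k w) = (\<Sum>v\<in>PiE S V. \<Sum>w\<in>cell S v. p w * (h S w * k w))"
    unfolding E_def by (rule GL[OF S])
  also have "\<dots> = (\<Sum>v\<in>PiE S V. \<Sum>w\<in>cell S v. p w * (F w * k w))"
  proof (rule sum.cong[OF refl])
    fix v assume v: "v \<in> PiE S V"
    show "(\<Sum>w\<in>cell S v. p w * (h S w * k w)) = (\<Sum>w\<in>cell S v. p w * (F w * k w))"
    proof (cases "cell S v = {}")
      case True then show ?thesis by simp
    next
      case False
      then obtain w0 where w0: "w0 \<in> cell S v" by auto
      have "(\<Sum>w\<in>cell S v. p w * (h S w * k w)) = (\<Sum>w\<in>cell S v. (p w * (s S v / m S v)) * k w)"
        by (rule sum.cong[OF refl]) (simp add: h_cell)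
      also have "\<dots> = (\<Sum>w\<in>cell S v. p w * (s S v / m S v)) * k w0"
        by (rule cell_const[OF w0 k])
      also have "\<dots> = m S v * (s S v / m S v) * k w0"
        by (simp only: pc)
      also have "\<dots> = s S v * k w0"
        using s0[of S v] by (cases "m S v = 0") auto
      also have "\<dots> = (\<Sum>w\<in>cell S v. (p w * F w) * k w)"
        by (simp add: cell_const[OF w0 k] s_def)
      finally show ?thesis by (simp add: mult.assoc)
    qed
  qed
  also have "\<dots> = E (\<lambda>w. F w * k w)"
    unfolding E_def by (rule GL[OF S, symmetric])
  finally show ?thesis .
qed

lemma G_eq: assumes S: "S \<subseteq> I" shows "G S = E (\<lambda>w. h S w * h S w)"
proof -
  have "E (\<lambda>w. h S w * h S w) = (\<Sum>v\<in>PiE S V. \<Sum>w\<in>cell S v. p w * (h S w * h S w))"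
    unfolding E_def by (rule GL[OF S])
  also have "\<dots> = (\<Sum>v\<in>PiE S V. (s S v)^2 / m S v)"
  proof (rule sum.cong[OF refl])
    fix v assume v: "v \<in> PiE S V"
    have "(\<Sum>w\<in>cell S v. p w * (h S w * h S w)) = (\<Sum>w\<in>cell S v. p w * ((s S v / m S v) * (s S v / m S v)))"
      by (rule sum.cong[OF refl]) (simp add: h_cell)
    also have "\<dots> = m S v * ((s S v / m S v) * (s S v / m S v))"
      by (rule pc)
    also have "\<dots> = (s S v)^2 / m S v"
      using s0[of S v] by (cases "m S v = 0") (auto simp: power2_eq_square)
    finally show "(\<Sum>w\<in>cell S v. p w * (h S w * h S w)) = (s S v)^2 / m S v" .
  qed
  finally show ?thesis unfolding G_def by simp
qed

lemma alg: "(a::real) \<noteq> 0 \<Longrightarrow> X - 2 * (b / a) * b + (b / a)^2 * a = X - b^2 / a"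
proof -
  assume a: "a \<noteq> 0"
  have 1: "(b/a)^2 * a = b^2/a" using a by (simp add: power2_eq_square)
  have 2: "2*(b/a)*b = 2*(b^2/a)" by (simp add: power2_eq_square)
  show ?thesis unfolding 1 2 by simp
qed

lemma Ev_eq: assumes S: "S \<subseteq> I" shows "Ev S = E (\<lambda>w. (F w)^2) - G S"
proof -
  have "Ev S = (\<Sum>v\<in>PiE S V. if m S v > 0 then
      m S v * ((\<Sum>w\<in>cell S v. p w * (F w - s S v / m S v)^2) / m S v) else 0)"
    unfolding Ev_def by (rule sum.inter_filter) (rule finPi[OF S])
  also have "\<dots> = (\<Sum>v\<in>PiE S V. (\<Sum>w\<in>cell S v. p w * (F w)^2) - (s S v)^2 / m S v)"
  proof (rule sum.cong[OF refl])
    fix v assume v: "v \<in> PiE S V"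
    show "(if m S v > 0 then
      m S v * ((\<Sum>w\<in>cell S v. p w * (F w - s S v / m S v)^2) / m S v) else 0)
      = (\<Sum>w\<in>cell S v. p w * (F w)^2) - (s S v)^2 / m S v"
    proof (cases "m S v = 0")
      case True
      have z: "\<And>w. w \<in> cell S v \<Longrightarrow> p w = 0" using m0[OF True] .
      have "(\<Sum>w\<in>cell S v. p w * (F w)^2) = 0" using z by simp
      then show ?thesis using True s0[OF True] by simp
    next
      case False
      then have mp: "m S v > 0" using m_nn[of S v] by simp
      define c where "c = s S v / m S v"
      have "(\<Sum>w\<in>cell S v. p w * (F w - c)^2) =
         (\<Sum>w\<in>cell S v. p w * (F w)^2 - 2 * c * (p w * F w) + c^2 * p w)"
        by (rule sum.cong[OF refl]) (simp add: power2_eq_square algebra_simps)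
      also have "\<dots> = (\<Sum>w\<in>cell S v. p w * (F w)^2) - 2 * c * s S v + c^2 * m S v"
      proof -
        have e2: "(\<Sum>w\<in>cell S v. 2*c*(p w*F w)) = 2*c * s S v"
          unfolding s_def by (rule sum_distrib_left[symmetric])
        have e3: "(\<Sum>w\<in>cell S v. c^2*p w) = c^2 * m S v"
          unfolding m_def by (rule sum_distrib_left[symmetric])
        show ?thesis by (simp only: sum.distrib sum_subtractf e2 e3)
      qed
      also have "\<dots> = (\<Sum>w\<in>cell S v. p w * (F w)^2) - (s S v)^2 / m S v"
        using False unfolding c_def by (rule alg)
      finally show ?thesis using mp False unfolding c_def by simp
    qed
  qed
  also have "\<dots> = (\<Sum>v\<in>PiE S V. \<Sum>w\<in>cell S v. p w * (F w)^2) - G S"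
    unfolding G_def by (simp add: sum_subtractf)
  also have "\<dots> = E (\<lambda>w. (F w)^2) - G S"
    unfolding E_def using GL[OF S, of "\<lambda>w. p w * (F w)^2"] by simp
  finally show ?thesis .
qed

lemma E_diff: "E (\<lambda>w. a w - b w) = E a - E b"
  unfolding E_def by (simp add: right_diff_distrib sum_subtractf)
lemma E_add: "E (\<lambda>w. a w + b w) = E a + E b"
  unfolding E_def by (simp add: distrib_left sum.distrib)
lemma E_cmult: "E (\<lambda>w. c * a w) = c * E a"
  unfolding E_def by (simp add: sum_distrib_left mult.left_commute)
lemma E_mult_diff_left: "E (\<lambda>w. (a w - b w) * c w) = E (\<lambda>w. a w * c w) - E (\<lambda>w. b w * c w)"
  unfolding E_def by (simp add: algebra_simps sum_subtractf)
lemma E_mult_diff_right: "E (\<lambda>w. c w * (a w - b w)) = E (\<lambda>w. c w * a w) - E (\<lambda>w. c w * b w)"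
  unfolding E_def by (simp add: algebra_simps sum_subtractf)
lemma E_comm: "E (\<lambda>w. a w * b w) = E (\<lambda>w. b w * a w)"
  unfolding E_def by (simp add: mult.commute)
lemma E_sq: "E (\<lambda>w. a w * a w) \<ge> 0"
  unfolding E_def by (rule sum_nonneg) (metis mult_nonneg_nonneg pnn zero_le_square)

lemma upd_W: "w \<in> W \<Longrightarrow> j \<in> I \<Longrightarrow> x \<in> V j \<Longrightarrow> w(j:=x) \<in> W"
  unfolding PiE_def Pi_def extensional_def by auto

lemma lemma_b1:
  assumes S: "S \<subseteq> I" and ind: "indepS j S" and k: "cst S k"
  shows "E (\<lambda>w. h S w * ((if w j = x then 1 else 0) * k w)) = mj j x * E (\<lambda>w. F w * k w)"
proof -
  have "E (\<lambda>w. h S w * ((if w j = x then 1 else 0) * k w))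
      = (\<Sum>v\<in>PiE S V. \<Sum>w\<in>cell S v. p w * (h S w * ((if w j = x then 1 else 0) * k w)))"
    unfolding E_def by (rule GL[OF S])
  also have "\<dots> = (\<Sum>v\<in>PiE S V. mj j x * (\<Sum>w\<in>cell S v. p w * (F w * k w)))"
  proof (rule sum.cong[OF refl])
    fix v assume v: "v \<in> PiE S V"
    show "(\<Sum>w\<in>cell S v. p w * (h S w * ((if w j = x then 1 else 0) * k w)))
        = mj j x * (\<Sum>w\<in>cell S v. p w * (F w * k w))"
    proof (cases "cell S v = {}")
      case True then show ?thesis by simp
    next
      case False
      then obtain w0 where w0: "w0 \<in> cell S v" by auto
      define c where "c = s S v / m S v"
      have "(\<Sum>w\<in>cell S v. p w * (h S w * ((if w j = x then 1 else 0) * k w)))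
          = (\<Sum>w\<in>cell S v. (c * (if w j = x then p w else 0)) * k w)"
        by (rule sum.cong[OF refl]) (simp add: h_cell c_def)
      also have "\<dots> = (\<Sum>w\<in>cell S v. c * (if w j = x then p w else 0)) * k w0"
        by (rule cell_const[OF w0 k])
      also have "(\<Sum>w\<in>cell S v. c * (if w j = x then p w else 0))
           = c * (\<Sum>w\<in>cell S v. (if w j = x then p w else 0))"
        by (rule sum_distrib_left[symmetric])
      also have "(\<Sum>w\<in>cell S v. (if w j = x then p w else 0)) = (\<Sum>w\<in>{w\<in>cell S v. w j = x}. p w)"
        by (rule sum.inter_filter[symmetric]) simp
      also have "\<dots> = m S v * mj j x" using ind v unfolding indepS_def by blast
      also have "c * (m S v * mj j x) * k w0 = mj j x * (s S v * k w0)"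
        unfolding c_def using s0[of S v] by (cases "m S v = 0") auto
      also have "s S v * k w0 = (\<Sum>w\<in>cell S v. (p w * F w) * k w)"
        unfolding s_def by (rule cell_const[OF w0 k, symmetric])
      finally show ?thesis by (simp add: mult.assoc)
    qed
  qed
  also have "\<dots> = mj j x * (\<Sum>v\<in>PiE S V. \<Sum>w\<in>cell S v. p w * (F w * k w))"
    by (rule sum_distrib_left[symmetric])
  also have "\<dots> = mj j x * E (\<lambda>w. F w * k w)"
    unfolding E_def by (simp only: GL[OF S, symmetric])
  finally show ?thesis .
qed

lemma lemma_b:
  assumes TU: "T \<subseteq> U" and U: "U \<subseteq> I" and j: "j \<in> I" "j \<notin> U"
    and indT: "indepS j T" and indU: "indepS j U" and k: "cst (insert j T) k"
  shows "E (\<lambda>w. h U w * k w) = E (\<lambda>w. h T w * k w)"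
proof -
  define kk where "kk x w = k (w(j:=x))" for x w
  have dec: "k w = (\<Sum>x\<in>V j. (if w j = x then 1 else 0) * kk x w)" if w: "w \<in> W" for w
  proof -
    have wj: "w j \<in> V j" using w j by (simp add: PiE_mem)
    have "(\<Sum>x\<in>V j. (if w j = x then 1 else 0) * kk x w) = (\<Sum>x\<in>V j. if w j = x then kk x w else 0)"
      by (rule sum.cong) auto
    also have "\<dots> = kk (w j) w" using wj finV j by (simp add: sum.delta')
    also have "\<dots> = k w" unfolding kk_def by simp
    finally show ?thesis by simp
  qed
  have gen: "E (\<lambda>w. h S w * k w) = (\<Sum>x\<in>V j. mj j x * E (\<lambda>w. F w * kk x w))"
    if S: "S \<subseteq> I" "T \<subseteq> S" "j \<notin> S" and indS: "indepS j S" for S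
  proof -
    have "E (\<lambda>w. h S w * k w) = (\<Sum>w\<in>W. \<Sum>x\<in>V j. p w * (h S w * ((if w j = x then 1 else 0) * kk x w)))"
      unfolding E_def
    proof (rule sum.cong[OF refl])
      fix w assume "w \<in> W"
      then show "p w * (h S w * k w) = (\<Sum>x\<in>V j. p w * (h S w * ((if w j = x then 1 else 0) * kk x w)))"
        using dec[of w] by (simp add: sum_distrib_left)
    qed
    also have "\<dots> = (\<Sum>x\<in>V j. E (\<lambda>w. h S w * ((if w j = x then 1 else 0) * kk x w)))"
      unfolding E_def by (rule sum.swap)
    also have "\<dots> = (\<Sum>x\<in>V j. mj j x * E (\<lambda>w. F w * kk x w))"
    proof (rule sum.cong[OF refl])
      fix x assume x: "x \<in> V j"
      have "cst S (kk x)" unfolding cst_def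
      proof (intro ballI impI)
        fix w w' assume ww: "w \<in> W" "w' \<in> W" "\<forall>i\<in>S. w i = w' i"
        have "w(j:=x) \<in> W" "w'(j:=x) \<in> W" using upd_W ww j x by auto
        moreover have "\<forall>i\<in>insert j T. (w(j:=x)) i = (w'(j:=x)) i" using ww S by auto
        ultimately show "kk x w = kk x w'" unfolding kk_def using k unfolding cst_def by blast
      qed
      then show "E (\<lambda>w. h S w * ((if w j = x then 1 else 0) * kk x w)) = mj j x * E (\<lambda>w. F w * kk x w)"
        by (rule lemma_b1[OF S(1) indS])
    qed
    finally show ?thesis .
  qed
  have "T \<subseteq> I" "j \<notin> T" using TU U j by auto
  then show ?thesis using gen[OF U TU j(2) indU] gen[OF _ order_refl _ indT] by simp
qed

theorem fin_main:
  assumes TU: "T \<subseteq> U" and U: "U \<subseteq> I" and j: "j \<in> I" "j \<notin> U"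
    and indT: "indepS j T" and indU: "indepS j U"
  shows "G (insert j T) - G T \<le> G (insert j U) - G U"
proof -
  define A where "A = h (insert j U)"
  define B where "B = h U"
  define C where "C = h (insert j T)"
  define D where "D = h T"
  define d where "d = (\<lambda>w. C w - D w)"
  have T: "T \<subseteq> I" using TU U by auto
  have Uj: "insert j U \<subseteq> I" and Tj: "insert j T \<subseteq> I" using U T j by auto
  have GA: "G (insert j U) = E (\<lambda>w. A w * A w)" unfolding A_def by (rule G_eq[OF Uj])
  have GB: "G U = E (\<lambda>w. B w * B w)" unfolding B_def by (rule G_eq[OF U])
  have GC: "G (insert j T) = E (\<lambda>w. C w * C w)" unfolding C_def by (rule G_eq[OF Tj])
  have GD: "G T = E (\<lambda>w. D w * D w)" unfolding D_def by (rule G_eq[OF T])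
  have cB: "cst U B" unfolding B_def by (rule cst_h)
  have cD: "cst T D" unfolding D_def by (rule cst_h)
  have cC: "cst (insert j T) C" unfolding C_def by (rule cst_h)
  have cd: "cst (insert j T) d" unfolding d_def
    by (rule cst_diff[OF cC cst_mono[OF _ cD]]) auto
  have aAB: "E (\<lambda>w. A w * B w) = E (\<lambda>w. B w * B w)"
  proof -
    have "E (\<lambda>w. A w * B w) = E (\<lambda>w. F w * B w)" unfolding A_def
      by (rule lemma_a[OF Uj cst_mono[OF _ cB]]) auto
    also have "\<dots> = E (\<lambda>w. B w * B w)" unfolding B_def
      by (rule lemma_a[OF U cst_h, symmetric])
    finally show ?thesis .
  qed
  have aCD: "E (\<lambda>w. C w * D w) = E (\<lambda>w. D w * D w)"
  proof -
    have "E (\<lambda>w. C w * D w) = E (\<lambda>w. F w * D w)" unfolding C_def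
      by (rule lemma_a[OF Tj cst_mono[OF _ cD]]) auto
    also have "\<dots> = E (\<lambda>w. D w * D w)" unfolding D_def
      by (rule lemma_a[OF T cst_h, symmetric])
    finally show ?thesis .
  qed
  have q1: "E (\<lambda>w. A w * d w) = E (\<lambda>w. F w * d w)" unfolding A_def
    by (rule lemma_a[OF Uj cst_mono[OF _ cd]]) (use TU in auto)
  have q2: "E (\<lambda>w. C w * d w) = E (\<lambda>w. F w * d w)" unfolding C_def
    by (rule lemma_a[OF Tj cd])
  have q3: "E (\<lambda>w. B w * d w) = E (\<lambda>w. D w * d w)" unfolding B_def D_def
    by (rule lemma_b[OF TU U j indT indU cd])
  have q4: "E (\<lambda>w. D w * d w) = 0"
  proof -
    have "E (\<lambda>w. D w * d w) = E (\<lambda>w. D w * C w) - E (\<lambda>w. D w * D w)"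
      unfolding d_def by (rule E_mult_diff_right)
    moreover have "E (\<lambda>w. D w * C w) = E (\<lambda>w. C w * D w)" by (rule E_comm)
    ultimately show ?thesis using aCD by simp
  qed
  have q5: "E (\<lambda>w. C w * d w) = E (\<lambda>w. C w * C w) - E (\<lambda>w. C w * D w)"
    unfolding d_def by (rule E_mult_diff_right)
  have q6: "E (\<lambda>w. d w * d w) = E (\<lambda>w. C w * d w) - E (\<lambda>w. D w * d w)"
  proof -
    have "E (\<lambda>w. d w * d w) = E (\<lambda>w. (C w - D w) * d w)" unfolding d_def by simp
    also have "\<dots> = E (\<lambda>w. C w * d w) - E (\<lambda>w. D w * d w)" by (rule E_mult_diff_left)
    finally show ?thesis .
  qed
  have pw: "(\<lambda>w. (A w - B w - d w) * (A w - B w - d w)) =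
     (\<lambda>w. (A w * A w + B w * B w + d w * d w + 2 * (B w * d w)) - (2 * (A w * B w) + 2 * (A w * d w)))"
    by (rule ext) (simp add: algebra_simps)
  have "0 \<le> E (\<lambda>w. (A w - B w - d w) * (A w - B w - d w))" by (rule E_sq)
  also have "\<dots> = E (\<lambda>w. A w * A w) + E (\<lambda>w. B w * B w) + E (\<lambda>w. d w * d w) + 2 * E (\<lambda>w. B w * d w)
      - (2 * E (\<lambda>w. A w * B w) + 2 * E (\<lambda>w. A w * d w))"
    unfolding pw by (simp only: E_diff E_add E_cmult)
  finally have "0 \<le> E (\<lambda>w. A w * A w) + E (\<lambda>w. B w * B w) + E (\<lambda>w. d w * d w) + 2 * E (\<lambda>w. B w * d w)
      - (2 * E (\<lambda>w. A w * B w) + 2 * E (\<lambda>w. A w * d w))" .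
  then show ?thesis using GA GB GC GD aAB aCD q1 q2 q3 q4 q5 q6 by linarith
qed

end


context prob_space
begin

lemma eq_sets: "Y \<in> borel_measurable M \<Longrightarrow> {\<omega>\<in>space M. Y \<omega> = (c::real)} \<in> sets M"
  by measurable

lemma indep_prod:
  assumes ind: "indep_vars (\<lambda>_. borel) X I" and S: "finite S" "S \<subseteq> I" and j: "j \<in> I" "j \<notin> S"
  shows "prob {\<omega>\<in>space M. (\<forall>i\<in>S. X i \<omega> = v i) \<and> X j \<omega> = x}
       = prob {\<omega>\<in>space M. \<forall>i\<in>S. X i \<omega> = v i} * prob {\<omega>\<in>space M. X j \<omega> = (x::real)}"
proof (cases "S = {}")
  case True then show ?thesis by (simp add: prob_space)
next
  case False
  have ind2: "indep_sets (\<lambda>i. {X i -` A \<inter> space M | A. A \<in> sets borel}) I"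
    using ind unfolding indep_vars_def2 by blast
  define c where "c = v(j:=x)"
  define Ai where "Ai i = X i -` {c i} \<inter> space M" for i
  have Ain: "\<forall>i\<in>insert j S. Ai i \<in> {X i -` A \<inter> space M | A. A \<in> sets borel}"
    unfolding Ai_def by (auto intro: borel_singleton)
  have "prob (\<Inter>i\<in>insert j S. Ai i) = (\<Prod>i\<in>insert j S. prob (Ai i))"
    by (rule indep_setsD[OF ind2]) (use S j Ain in auto)
  also have "\<dots> = prob (Ai j) * (\<Prod>i\<in>S. prob (Ai i))" using S j by simp
  also have "(\<Prod>i\<in>S. prob (Ai i)) = prob (\<Inter>i\<in>S. Ai i)"
    by (rule indep_setsD[OF ind2, symmetric]) (use S j Ain False in auto)
  finally have eq: "prob (\<Inter>i\<in>insert j S. Ai i) = prob (Ai j) * prob (\<Inter>i\<in>S. Ai i)" .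
  have s1: "(\<Inter>i\<in>insert j S. Ai i) = {\<omega>\<in>space M. (\<forall>i\<in>S. X i \<omega> = v i) \<and> X j \<omega> = x}"
    unfolding Ai_def c_def using j by auto
  have s2: "(\<Inter>i\<in>S. Ai i) = {\<omega>\<in>space M. \<forall>i\<in>S. X i \<omega> = v i}"
    unfolding Ai_def c_def using j False by auto
  have s3: "Ai j = {\<omega>\<in>space M. X j \<omega> = x}"
    unfolding Ai_def c_def by auto
  show ?thesis using eq unfolding s1 s2 s3 by simp
qed

lemma bridge:
  fixes H :: "(nat \<Rightarrow> real) \<Rightarrow> real"
  assumes finI: "finite I" and finV: "\<forall>i\<in>I. finite (V i)"
    and meas: "\<forall>i\<in>I. X i \<in> borel_measurable M" and inV: "\<forall>i\<in>I. \<forall>\<omega>\<in>space M. X i \<omega> \<in> V i"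
  shows "(\<integral>\<omega>. H (restrict (\<lambda>i. X i \<omega>) I) \<partial>M)
      = (\<Sum>w\<in>PiE I V. measure M {\<omega>\<in>space M. restrict (\<lambda>i. X i \<omega>) I = w} * H w)"
proof -
  let ?x = "\<lambda>\<omega>. restrict (\<lambda>i. X i \<omega>) I"
  let ?C = "\<lambda>w. {\<omega>\<in>space M. ?x \<omega> = w}"
  have finW: "finite (PiE I V)" using finI finV by (simp add: finite_PiE)
  have Cs: "?C w \<in> sets M" if w: "w \<in> PiE I V" for w
  proof -
    have we: "w \<in> extensional I" using w by (simp add: PiE_def)
    have "?C w = {\<omega>\<in>space M. \<forall>i\<in>I. X i \<omega> = w i}"
      using restr_eq[OF we] by auto
    also have "\<dots> \<in> sets M"
      by (rule sets.sets_Collect_finite_All[OF eq_sets finI]) (use meas in auto)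
    finally show ?thesis .
  qed
  have pw: "H (?x \<omega>) = (\<Sum>w\<in>PiE I V. indicator (?C w) \<omega> * H w)" if om: "\<omega> \<in> space M" for \<omega>
  proof -
    have xin: "?x \<omega> \<in> PiE I V" using inV om by (simp add: restrict_PiE_iff)
    have "(\<Sum>w\<in>PiE I V. indicator (?C w) \<omega> * H w) = (\<Sum>w\<in>PiE I V. if ?x \<omega> = w then H w else 0)"
      by (rule sum.cong) (auto simp: indicator_def om)
    also have "\<dots> = H (?x \<omega>)" using xin finW by (simp add: sum.delta)
    finally show ?thesis by simp
  qed
  have "(\<integral>\<omega>. H (?x \<omega>) \<partial>M) = (\<integral>\<omega>. (\<Sum>w\<in>PiE I V. indicator (?C w) \<omega> * H w) \<partial>M)"
    by (rule Bochner_Integration.integral_cong) (simp_all add: pw)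
  also have "\<dots> = (\<Sum>w\<in>PiE I V. (\<integral>\<omega>. indicator (?C w) \<omega> * H w \<partial>M))"
    by (rule Bochner_Integration.integral_sum) (use Cs in \<open>auto intro!: integrable_real_indicator simp: emeasure_eq_measure\<close>)
  also have "\<dots> = (\<Sum>w\<in>PiE I V. measure M (?C w) * H w)"
  proof (rule sum.cong[OF refl])
    fix w
    have "?C w \<inter> space M = ?C w" by blast
    then show "(\<integral>\<omega>. indicator (?C w) \<omega> * H w \<partial>M) = measure M (?C w) * H w" by simp
  qed
  finally show ?thesis .
qed

end


theorem mainTheorem3:
  fixes M :: "'a measure" and X :: "nat \<Rightarrow> 'a \<Rightarrow> real" and V :: "nat \<Rightarrow> real set"
    and n :: nat and f :: "real list \<Rightarrow> real" and T T' :: "nat set" and j :: nat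
  assumes "prob_space M"
    and "prob_space.indep_vars M (\<lambda>_. borel) X {..<n}"
    and "\<forall>i<n. finite (V i)"
    and "\<forall>i<n. \<forall>\<omega>\<in>space M. X i \<omega> \<in> V i"
    and "T \<subseteq> T'" and "T' \<subseteq> {..<n}"
    and "j \<in> {..<n} - T'"
  shows "EVar M X V n f (insert j T) - EVar M X V n f T
           \<ge> EVar M X V n f (insert j T') - EVar M X V n f T'"
proof -
  interpret prob_space M by (rule assms(1))
  define I where "I = {..<n}"
  have finI: "finite I" unfolding I_def by simp
  have finV: "\<forall>i\<in>I. finite (V i)" using assms(3) unfolding I_def by auto
  have ind: "indep_vars (\<lambda>_. borel) X I" using assms(2) unfolding I_def .
  have meas: "\<forall>i\<in>I. X i \<in> borel_measurable M" using ind unfolding indep_vars_def2 by auto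
  have inV: "\<forall>i\<in>I. \<forall>\<omega>\<in>space M. X i \<omega> \<in> V i" using assms(4) unfolding I_def by auto
  have TU: "T \<subseteq> T'" and U: "T' \<subseteq> I" and jI: "j \<in> I" and jU: "j \<notin> T'"
    using assms(5-7) unfolding I_def by auto
  have T: "T \<subseteq> I" using TU U by auto
  define xI where "xI \<omega> = restrict (\<lambda>i. X i \<omega>) I" for \<omega>
  define p where "p w = measure M {\<omega>\<in>space M. xI \<omega> = w}" for w
  define FF where "FF w = f (map w [0..<n])" for w :: "nat \<Rightarrow> real"
  interpret fw: finw I V p FF
    by unfold_locales (auto simp: finI finV p_def)
  have xI_app: "i \<in> I \<Longrightarrow> xI \<omega> i = X i \<omega>" for i \<omega> unfolding xI_def by simp
  have br: "(\<integral>\<omega>. H (xI \<omega>) \<partial>M) = (\<Sum>w\<in>PiE I V. p w * H w)" for H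
    unfolding xI_def p_def by (rule bridge[OF finI finV meas inV])
  have setb: "measure M {\<omega>\<in>space M. P (xI \<omega>)} = (\<Sum>w\<in>{w\<in>PiE I V. P w}. p w)" for P
  proof -
    let ?A = "{\<omega>\<in>space M. P (xI \<omega>)}"
    have "measure M ?A = (\<integral>\<omega>. indicator ?A \<omega> \<partial>M)"
    proof -
      have "?A \<inter> space M = ?A" by blast
      then show ?thesis by simp
    qed
    also have "\<dots> = (\<integral>\<omega>. (\<lambda>w. if P w then 1 else 0) (xI \<omega>) \<partial>M)"
      by (rule Bochner_Integration.integral_cong) (auto simp: indicator_def)
    also have "\<dots> = (\<Sum>w\<in>PiE I V. p w * (if P w then 1 else 0))" by (rule br)
    also have "\<dots> = (\<Sum>w\<in>PiE I V. if P w then p w else 0)" by (rule sum.cong) auto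
    also have "\<dots> = (\<Sum>w\<in>{w\<in>PiE I V. P w}. p w)"
      by (rule sum.inter_filter[symmetric]) (rule fw.finW)
    finally show ?thesis .
  qed
  have ce: "cond_event M X S v = {\<omega>\<in>space M. (\<lambda>w. \<forall>i\<in>S. w i = v i) (xI \<omega>)}" if "S \<subseteq> I" for S v
  proof -
    have "\<And>\<omega>. (\<forall>i\<in>S. xI \<omega> i = v i) \<longleftrightarrow> (\<forall>i\<in>S. X i \<omega> = v i)"
      using that xI_app by (metis subsetD)
    then show ?thesis unfolding cond_event_def by simp
  qed
  have mce: "measure M (cond_event M X S v) = fw.m S v" if "S \<subseteq> I" for S v
    unfolding ce[OF that] fw.m_def fw.cell_def using setb[of "\<lambda>w. \<forall>i\<in>S. w i = v i"] by simp
  have intcell: "(\<integral>\<omega>. indicator (cond_event M X S v) \<omega> * G (xI \<omega>) \<partial>M) = (\<Sum>w\<in>fw.cell S v. p w * G w)"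
    if S: "S \<subseteq> I" for S v G
  proof -
    have "(\<integral>\<omega>. indicator (cond_event M X S v) \<omega> * G (xI \<omega>) \<partial>M)
        = (\<integral>\<omega>. (\<lambda>w. (if \<forall>i\<in>S. w i = v i then 1 else 0) * G w) (xI \<omega>) \<partial>M)"
      by (rule Bochner_Integration.integral_cong) (auto simp: indicator_def ce[OF S])
    also have "\<dots> = (\<Sum>w\<in>PiE I V. p w * ((if \<forall>i\<in>S. w i = v i then 1 else 0) * G w))" by (rule br)
    also have "\<dots> = (\<Sum>w\<in>PiE I V. if \<forall>i\<in>S. w i = v i then p w * G w else 0)" by (rule sum.cong) auto
    also have "\<dots> = (\<Sum>w\<in>fw.cell S v. p w * G w)"
      unfolding fw.cell_def by (rule sum.inter_filter[symmetric]) (rule fw.finW)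
    finally show ?thesis .
  qed
  have fXeq: "fX n f X = (\<lambda>\<omega>. FF (xI \<omega>))"
  proof
    fix \<omega>
    have mm: "map (\<lambda>i. X i \<omega>) [0..<n] = map (xI \<omega>) [0..<n]"
      by (rule map_cong) (auto simp: xI_app I_def)
    show "fX n f X \<omega> = FF (xI \<omega>)" unfolding fX_def FF_def mm ..
  qed
  have cexp: "cond_exp_ev M (cond_event M X S v) (fX n f X) = fw.s S v / fw.m S v" if S: "S \<subseteq> I" for S v
    unfolding cond_exp_ev_def fXeq intcell[OF S] mce[OF S] fw.s_def by simp
  have cvar: "cond_var_ev M (cond_event M X S v) (fX n f X)
      = (\<Sum>w\<in>fw.cell S v. p w * (FF w - fw.s S v / fw.m S v)^2) / fw.m S v" if S: "S \<subseteq> I" for S v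
  proof -
    have "cond_var_ev M (cond_event M X S v) (fX n f X)
       = (\<integral>\<omega>. indicator (cond_event M X S v) \<omega> * (\<lambda>w. (FF w - fw.s S v / fw.m S v)^2) (xI \<omega>) \<partial>M)
         / measure M (cond_event M X S v)"
    proof -
      have c2: "cond_exp_ev M (cond_event M X S v) (\<lambda>\<omega>. FF (xI \<omega>)) = fw.s S v / fw.m S v"
        using cexp[OF S] unfolding fXeq .
      show ?thesis unfolding cond_var_ev_def fXeq c2 unfolding cond_exp_ev_def by simp
    qed
    then show ?thesis using intcell[OF S, of v "\<lambda>w. (FF w - fw.s S v / fw.m S v)^2"] mce[OF S, of v] by simp
  qed
  have EV: "EVar M X V n f S = fw.Ev S" if S: "S \<subseteq> I" for S
  proof -
    have "{v \<in> PiE S V. measure M (cond_event M X S v) > 0} = {v \<in> PiE S V. fw.m S v > 0}"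
      using mce[OF S] by simp
    then show ?thesis unfolding EVar_def fw.Ev_def
      using mce[OF S] cvar[OF S] by simp
  qed
  have indS: "fw.indepS j S" if S: "S \<subseteq> I" "j \<notin> S" for S
    unfolding fw.indepS_def
  proof (intro ballI allI)
    fix v x assume v: "v \<in> PiE S V"
    have finS: "finite S" using S finI finite_subset by blast
    have e1: "(\<Sum>w\<in>{w\<in>fw.cell S v. w j = x}. p w)
        = measure M {\<omega>\<in>space M. (\<lambda>w. (\<forall>i\<in>S. w i = v i) \<and> w j = x) (xI \<omega>)}"
      unfolding fw.cell_def using setb[of "\<lambda>w. (\<forall>i\<in>S. w i = v i) \<and> w j = x"]
      by (simp add: conj_assoc)
    also have "{\<omega>\<in>space M. (\<lambda>w. (\<forall>i\<in>S. w i = v i) \<and> w j = x) (xI \<omega>)}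
       = {\<omega>\<in>space M. (\<forall>i\<in>S. X i \<omega> = v i) \<and> X j \<omega> = x}"
    proof -
      have "\<And>\<omega>. (\<forall>i\<in>S. xI \<omega> i = v i) \<longleftrightarrow> (\<forall>i\<in>S. X i \<omega> = v i)"
        using S xI_app by (metis subsetD)
      moreover have "\<And>\<omega>. xI \<omega> j = X j \<omega>" using jI xI_app by blast
      ultimately show ?thesis by simp
    qed
    also have "measure M \<dots> = prob {\<omega>\<in>space M. \<forall>i\<in>S. X i \<omega> = v i} * prob {\<omega>\<in>space M. X j \<omega> = x}"
      by (rule indep_prod[OF ind finS S(1) jI S(2)])
    also have "prob {\<omega>\<in>space M. \<forall>i\<in>S. X i \<omega> = v i} = fw.m S v"
      using mce[OF S(1), of v] unfolding cond_event_def .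
    also have "prob {\<omega>\<in>space M. X j \<omega> = x} = fw.mj j x"
    proof -
      have "{\<omega>\<in>space M. X j \<omega> = x} = {\<omega>\<in>space M. (\<lambda>w. w j = x) (xI \<omega>)}"
        using jI xI_app by auto
      then show ?thesis unfolding fw.mj_def using setb[of "\<lambda>w. w j = x"] by simp
    qed
    finally show "(\<Sum>w\<in>{w\<in>fw.cell S v. w j = x}. p w) = fw.m S v * fw.mj j x" .
  qed
  have Tj: "insert j T \<subseteq> I" and Uj: "insert j T' \<subseteq> I" using T U jI by auto
  have main: "fw.G (insert j T) - fw.G T \<le> fw.G (insert j T') - fw.G T'"
    by (rule fw.fin_main[OF TU U jI jU indS[OF T] indS[OF U jU]]) (use TU jU in auto)
  show ?thesis
    unfolding EV[OF T] EV[OF U] EV[OF Tj] EV[OF Uj]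
      fw.Ev_eq[OF T] fw.Ev_eq[OF U] fw.Ev_eq[OF Tj] fw.Ev_eq[OF Uj]
    using main by simp
qed

end
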